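(* Let $n\ge2$ and $S=(a_1,\dots,a_n)$ with all $a_i$ positive integers. Define $\bar S=(L/a_1,\dots,L/a_n)$ where $L=\mathrm{lcm}(S)$. Then: (a) $\bar S$ is normal and $\overline{(\bar S)}$ is the normalization of $S$. (b) $J^*(\bar S)=J(S)$ and $J^*(S)=J(\bar S)$. (c) $\mathrm{type}(\bar S)=\mathrm{cotype}(S)$ and $\mathrm{type}(S)=\mathrm{cotype}(\bar S)$.
   Context: For $S=(a_1,\dots,a_n)\in\mathbb{Z}^n$: $S$ is normal if $\gcd(S)=1$; if $S\neq 0$ its normalization is $(a_1/d,\dots,a_n/d)$ with $d=\gcd(S)$. $S_i$ denotes $S$ with the $i$-th entry omitted. $J^*(S)=\{i\in\{1,\dots,n\}:\gcd(S_i)\neq\gcd(S)\}$, $J(S)=\{i:\mathrm{lcm}(S_i)\neq\mathrm{lcm}(S)\}=\{i: a_i\nmid\mathrm{lcm}(S_i)\}$, $\mathrm{type}(S)=|J^*(S)|$, $\mathrm{cotype}(S)=|J(S)|$. By convention gcd and lcm are nonnegative. *)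

theory Defs
  imports Main
begin

text \<open>A tuple S = (a_1,...,a_n) in Z^n is represented as an int list of length n.
  Indices are 0-based: position i of the list is the entry a_(i+1).\<close>

definition gcdS :: "int list \<Rightarrow> int" where
  "gcdS S = Gcd (set S)"

definition lcmS :: "int list \<Rightarrow> int" where
  "lcmS S = Lcm (set S)"

definition normal :: "int list \<Rightarrow> bool" where
  "normal S \<longleftrightarrow> gcdS S = 1"

definition normalization :: "int list \<Rightarrow> int list" where
  "normalization S = map (\<lambda>a. a div gcdS S) S"

definition omit :: "int list \<Rightarrow> nat \<Rightarrow> int list" where
  "omit S i = take i S @ drop (Suc i) S"

definition Jstar :: "int list \<Rightarrow> nat set" where
  "Jstar S = {i. i < length S \<and> gcdS (omit S i) \<noteq> gcdS S}"

definition J :: "int list \<Rightarrow> nat set" where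
  "J S = {i. i < length S \<and> lcmS (omit S i) \<noteq> lcmS S}"

definition type :: "int list \<Rightarrow> nat" where
  "type S = card (Jstar S)"

definition cotype :: "int list \<Rightarrow> nat" where
  "cotype S = card (J S)"

definition bar :: "int list \<Rightarrow> int list" where
  "bar S = map (\<lambda>a. lcmS S div a) S"

end

theory Submission
  imports Defs
begin

lemma divI: "(L::int) = g * q \<Longrightarrow> g \<noteq> 0 \<Longrightarrow> L div g = q"
  by simp

lemma Gcd_bar:
  fixes A :: "int set" and L :: int
  assumes fin: "finite A" and ne: "A \<noteq> {}" and pos: "\<forall>a\<in>A. a > 0 \<and> a dvd L" and L: "L > 0"
  shows "Gcd ((\<lambda>a. L div a) ` A) = L div Lcm A"
proof -
  define l where "l = Lcm A"
  have ldvd: "l dvd L" unfolding l_def using pos by (simp add: Lcm_dvd_iff)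
  have "l \<noteq> 0" unfolding l_def using fin pos Lcm_0_iff by fastforce
  moreover have "l \<ge> 0" unfolding l_def by simp
  ultimately have lpos: "l > 0" by simp
  define g where "g = Gcd ((\<lambda>a. L div a) ` A)"
  have 1: "L div l dvd g" unfolding g_def
  proof (rule Gcd_greatest)
    fix b assume "b \<in> (\<lambda>a. L div a) ` A"
    then obtain a where a: "a \<in> A" "b = L div a" by auto
    have "a dvd l" unfolding l_def using a(1) by simp
    then obtain k where k: "l = a * k" by (auto elim: dvdE)
    from ldvd obtain t where t: "L = l * t" by (auto elim: dvdE)
    have "a > 0" using pos a by auto
    have "L div a = k * t" using t k \<open>a > 0\<close> by (simp add: mult.assoc)
    moreover have "L div l = t" using t lpos by simp
    ultimately show "L div l dvd b" using a by simp
  qed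
  obtain a0 where a0: "a0 \<in> A" using ne by auto
  have "g dvd L div a0" unfolding g_def using a0 by (simp add: dvd_Gcd_iff)
  moreover have "L div a0 \<noteq> 0" using pos a0 L
    by (metis dvd_div_eq_0_iff less_irrefl)
  ultimately have "g \<noteq> 0" by auto
  moreover have "g \<ge> 0" unfolding g_def by simp
  ultimately have gpos: "g > 0" by simp
  have "a0 dvd L" "a0 > 0" using pos a0 by auto
  then obtain k0 where k0: "L = a0 * k0" by (auto elim: dvdE)
  then have "L div a0 = k0" using \<open>a0 > 0\<close> by simp
  then have "L div a0 dvd L" using k0 by simp
  then have gL: "g dvd L" using \<open>g dvd L div a0\<close> dvd_trans by blast
  have "\<forall>a\<in>A. a dvd L div g"
  proof
    fix a assume a: "a \<in> A"
    have "g dvd L div a" unfolding g_def using a by (simp add: dvd_Gcd_iff)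
    then obtain k where k: "L div a = g * k" by (auto elim: dvdE)
    have "L = a * (L div a)" using pos a by simp
    then have "L = g * (a * k)" using k by (simp add: ac_simps)
    then have "L div g = a * k" using gpos by simp
    then show "a dvd L div g" by simp
  qed
  then have "l dvd L div g" unfolding l_def by (simp add: Lcm_dvd_iff)
  then obtain k where k: "L div g = l * k" by (auto elim: dvdE)
  have "L = g * (L div g)" using gL by simp
  then have "L = l * (g * k)" using k by (simp add: ac_simps)
  then have "L div l = g * k" using lpos by simp
  then have 2: "g dvd L div l" by simp
  have "L div l \<ge> 0" unfolding pos_imp_zdiv_nonneg_iff[OF lpos] using L by simp
  from zdvd_antisym_nonneg[OF this _ 1 2] show ?thesis
    unfolding g_def l_def using \<open>g \<ge> 0\<close> by (simp add: g_def)
qed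

lemma Lcm_bar:
  fixes A :: "int set" and L :: int
  assumes fin: "finite A" and ne: "A \<noteq> {}" and pos: "\<forall>a\<in>A. a > 0 \<and> a dvd L" and L: "L > 0"
  shows "Lcm ((\<lambda>a. L div a) ` A) = L div Gcd A"
proof -
  define g where "g = Gcd A"
  obtain a0 where a0: "a0 \<in> A" using ne by auto
  have "g dvd a0" unfolding g_def using a0 by simp
  moreover have "a0 \<noteq> 0" using pos a0 by auto
  ultimately have "g \<noteq> 0" by auto
  moreover have "g \<ge> 0" unfolding g_def by simp
  ultimately have gpos: "g > 0" by simp
  have gL: "g dvd L" using \<open>g dvd a0\<close> pos a0 dvd_trans by blast
  define m where "m = Lcm ((\<lambda>a. L div a) ` A)"
  have 1: "m dvd L div g" unfolding m_def Lcm_dvd_iff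
  proof
    fix b assume "b \<in> (\<lambda>a. L div a) ` A"
    then obtain a where a: "a \<in> A" "b = L div a" by auto
    have "g dvd a" unfolding g_def using a(1) by simp
    then obtain k where k: "a = g * k" by (auto elim: dvdE)
    have "a > 0" using pos a by auto
    have "L = a * (L div a)" using pos a by simp
    then have "L = g * (k * (L div a))" using k by (simp add: ac_simps)
    then have "L div g = k * (L div a)" using gpos by (intro divI) auto
    then show "b dvd L div g" using a by simp
  qed
  have "\<forall>a\<in>A. L dvd a * m"
  proof
    fix a assume a: "a \<in> A"
    have "L div a dvd m" unfolding m_def using a by simp
    then have X: "(L div a) * a dvd m * a" by (rule mult_dvd_mono) simp
    have Y: "(L div a) * a = L" using pos a by simp
    from X have "L dvd m * a" by (simp only: Y)
    then show "L dvd a * m" by (simp only: mult.commute)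
  qed
  then have "L dvd Gcd ((*) m ` A)" by (simp add: dvd_Gcd_iff ac_simps)
  also have "Gcd ((*) m ` A) = normalize (m * g)" unfolding g_def by (rule Gcd_mult)
  finally have "L dvd m * g" by simp
  then obtain k where k: "m * g = L * k" by (auto elim: dvdE)
  have "L = g * (L div g)" using gL by simp
  then have "m * g = g * ((L div g) * k)" using k by (simp add: ac_simps)
  then have "m = (L div g) * k" using gpos by simp
  then have 2: "L div g dvd m" by simp
  have "L div g \<ge> 0" unfolding pos_imp_zdiv_nonneg_iff[OF gpos] using L by simp
  have "m \<ge> 0" unfolding m_def by simp
  from zdvd_antisym_nonneg[OF this \<open>L div g \<ge> 0\<close> 1 2] show ?thesis
    unfolding m_def g_def .
qed

lemma omit_map: "omit (map f S) i = map f (omit S i)"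
  unfolding omit_def by (simp add: take_map drop_map)

lemma set_omit: "set (omit S i) \<subseteq> set S"
  unfolding omit_def using set_take_subset set_drop_subset by fastforce

lemma length_omit: "i < length S \<Longrightarrow> length (omit S i) = length S - 1"
  unfolding omit_def by simp

lemma div_inj_aux:
  fixes L x y :: int
  assumes "L > 0" "x > 0" "y > 0" "x dvd L" "y dvd L" "L div x = L div y"
  shows "x = y"
proof -
  have "L = x * (L div x)" using assms(4) by simp
  moreover have "L = y * (L div y)" using assms(5) by simp
  moreover have "L div y \<noteq> 0" using assms by (metis dvd_div_eq_0_iff less_irrefl)
  ultimately show ?thesis using assms(6) by (metis mult_right_cancel)
qed

theorem lemma4p2:
  fixes S :: "int list"
  assumes "length S \<ge> 2"
    and "\<forall>a\<in>set S. a > 0"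
  shows "(normal (bar S) \<and> bar (bar S) = normalization S)
       \<and> (Jstar (bar S) = J S \<and> Jstar S = J (bar S))
       \<and> (type (bar S) = cotype S \<and> type S = cotype (bar S))"
proof -
  define L where "L = lcmS S"
  define f where "f = (\<lambda>a::int. L div a)"
  have bar_eq: "bar S = map f S" unfolding bar_def f_def L_def ..
  have "L \<noteq> 0" unfolding L_def lcmS_def using assms(2) Lcm_0_iff[of "set S"] by fastforce
  moreover have "L \<ge> 0" unfolding L_def lcmS_def by simp
  ultimately have Lpos: "L > 0" by simp
  have pos: "\<forall>a\<in>set S. a > 0 \<and> a dvd L" using assms(2) unfolding L_def lcmS_def by simp
  have neS: "set S \<noteq> {}" using assms(1) by auto
  define g where "g = gcdS S"
  have gdvd: "\<forall>a\<in>set S. g dvd a" unfolding g_def gcdS_def by simp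
  obtain b0 where b0: "b0 \<in> set S" using neS by (metis ex_in_conv)
  have "g \<noteq> 0" using gdvd b0 assms(2) by fastforce
  moreover have "g \<ge> 0" unfolding g_def gcdS_def by simp
  ultimately have gpos: "g > 0" by simp
  have gbar: "gcdS (bar S) = 1"
    unfolding gcdS_def bar_eq set_map f_def
    using Gcd_bar[OF _ neS pos Lpos] Lpos by (simp add: L_def lcmS_def)
  have lbar: "lcmS (bar S) = L div g"
    unfolding lcmS_def bar_eq set_map f_def g_def gcdS_def
    using Lcm_bar[OF _ neS pos Lpos] by simp
  have bb: "bar (bar S) = normalization S"
    unfolding normalization_def bar_def[of "bar S"] lbar
    unfolding bar_eq map_map
  proof (rule map_cong)
    fix a assume a: "a \<in> set S"
    then have "g dvd a" using gdvd by simp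
    then obtain k where k: "a = g * k" by (auto elim: dvdE)
    have "L = a * (L div a)" using pos a by simp
    then have "L = g * (k * (L div a))" using k by (simp add: ac_simps)
    then have "L div g = k * (L div a)" using gpos by (intro divI) auto
    moreover have "L div a \<noteq> 0" using pos a Lpos by (metis dvd_div_eq_0_iff less_irrefl)
    moreover have "a div g = k" using k gpos by simp
    ultimately show "((\<lambda>b. L div g div b) \<circ> f) a = a div gcdS S"
      unfolding f_def g_def[symmetric] by simp
  qed simp
  have omitprops: "finite (set (omit S i)) \<and> set (omit S i) \<noteq> {} \<and> (\<forall>a\<in>set (omit S i). a > 0 \<and> a dvd L)"
    if "i < length S" for i
  proof -
    have "length (omit S i) \<ge> 1" using length_omit[OF that] assms(1) by simp
    then have "set (omit S i) \<noteq> {}" by auto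
    then show ?thesis using pos set_omit[of S i] by auto
  qed
  have J1: "Jstar (bar S) = J S"
    unfolding Jstar_def J_def gbar
  proof (intro Collect_cong conj_cong)
    fix i show "(i < length (bar S)) = (i < length S)" by (simp add: bar_eq)
    assume i: "i < length S"
    define l where "l = lcmS (omit S i)"
    have gi: "gcdS (omit (bar S) i) = L div l"
      unfolding gcdS_def bar_eq omit_map set_map f_def l_def lcmS_def
      using omitprops[OF i] Gcd_bar[of "set (omit S i)" L] Lpos by simp
    have "l \<noteq> 0" unfolding l_def lcmS_def using omitprops[OF i] Lcm_0_iff[of "set (omit S i)"] by fastforce
    moreover have "l \<ge> 0" unfolding l_def lcmS_def by simp
    ultimately have lpos: "l > 0" by simp
    have ldvd: "l dvd L" unfolding l_def lcmS_def using omitprops[OF i] by (simp add: Lcm_dvd_iff)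
    have "(L div l = 1) = (l = L)"
    proof
      assume "L div l = 1" then show "l = L" using ldvd by (metis dvd_mult_div_cancel mult.right_neutral)
    next
      assume "l = L" then show "L div l = 1" using lpos by simp
    qed
    then show "(gcdS (omit (bar S) i) \<noteq> 1) = (lcmS (omit S i) \<noteq> lcmS S)"
      unfolding gi l_def L_def by simp
  qed
  have J2: "Jstar S = J (bar S)"
    unfolding Jstar_def J_def lbar
  proof (intro Collect_cong conj_cong)
    fix i show "(i < length S) = (i < length (bar S))" by (simp add: bar_eq)
    assume "i < length (bar S)"
    then have i: "i < length S" by (simp add: bar_eq)
    define h where "h = gcdS (omit S i)"
    have li: "lcmS (omit (bar S) i) = L div h"
      unfolding lcmS_def bar_eq omit_map set_map f_def h_def gcdS_def
      using omitprops[OF i] Lcm_bar[of "set (omit S i)" L] Lpos by simp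
    obtain a0 where a0: "a0 \<in> set (omit S i)" using omitprops[OF i] by (metis ex_in_conv)
    have hd: "h dvd a0" unfolding h_def gcdS_def using a0 by simp
    have "a0 > 0" "a0 dvd L" using omitprops[OF i] a0 by auto
    then have "h \<noteq> 0" using hd by auto
    moreover have "h \<ge> 0" unfolding h_def gcdS_def by simp
    ultimately have hpos: "h > 0" by simp
    have hL: "h dvd L" using hd \<open>a0 dvd L\<close> dvd_trans by blast
    have gL: "g dvd L" using gdvd pos b0 dvd_trans by blast
    have "(L div h = L div g) = (h = g)"
      using div_inj_aux[OF Lpos hpos gpos hL gL] by auto
    then show "(gcdS (omit S i) \<noteq> gcdS S) = (lcmS (omit (bar S) i) \<noteq> L div g)"
      unfolding li h_def g_def by simp
  qed
  show ?thesis
    using gbar bb J1 J2 unfolding normal_def type_def cotype_def by simp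
qed

end
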